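(* Let $Z\subset\mathbb R^n$ be convex, for some $n\in\mathbb N$, and let $y\in Z$. The weight function $t_y:Z\to[0,1]$ is continuous (with respect to the Euclidean topology restricted to $Z$) if and only if $y\in Z\setminus\partial Z$.
   Context: For $x,y\in Z$ write $x\leq_C y$ if $y=tx+(1-t)z$ for some $z\in Z$ and $0<t\leq 1$; the boundary $\partial Z$ is the set of $y\in Z$ such that some $x\in Z$ has $x\not\leq_C y$. The weight function is $t_y(x)=\sup\{0\leq t<1 : \frac{y-tx}{1-t}\in Z\}$. *)

theory Defs
  imports "HOL-Analysis.Analysis"
begin

definition leC :: "'a::real_vector set \<Rightarrow> 'a \<Rightarrow> 'a \<Rightarrow> bool" where
  "leC Z x y \<longleftrightarrow> (\<exists>z\<in>Z. \<exists>t::real. 0 < t \<and> t \<le> 1 \<and> y = t *\<^sub>R x + (1 - t) *\<^sub>R z)"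

definition cboundary :: "'a::real_vector set \<Rightarrow> 'a set" where
  "cboundary Z = {y \<in> Z. \<exists>x\<in>Z. \<not> leC Z x y}"

definition weight :: "'a::real_vector set \<Rightarrow> 'a \<Rightarrow> 'a \<Rightarrow> real" where
  "weight Z y x = Sup {t::real. 0 \<le> t \<and> t < 1 \<and> (1 / (1 - t)) *\<^sub>R (y - t *\<^sub>R x) \<in> Z}"

end

theory Submission imports Defs begin
lemma key:
  fixes Z :: "'a::real_vector set"
  assumes "convex Z" "0 \<le> s" "s < t" "t < 1"
    and z: "(1/(1-t)) *\<^sub>R (y - t *\<^sub>R a) \<in> Z"
    and p: "y + (s*t/(t-s)) *\<^sub>R (a - b) \<in> Z"
  shows "(1/(1-s)) *\<^sub>R (y - s *\<^sub>R b) \<in> Z"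
proof -
  define \<alpha> where "\<alpha> = s*(1-t)/(t*(1-s))"
  have t0: "t > 0" "1 - s > 0" "1 - t > 0" "t - s > 0" using assms by auto
  have a0: "0 \<le> \<alpha>" using t0 assms unfolding \<alpha>_def by auto
  have a1: "\<alpha> \<le> 1" using t0 assms unfolding \<alpha>_def by (auto simp: field_simps)
  have 1: "1 - \<alpha> = (t - s)/(t*(1-s))" using t0 unfolding \<alpha>_def by (simp add: field_simps)
  have "\<alpha> *\<^sub>R ((1/(1-t)) *\<^sub>R (y - t *\<^sub>R a)) + (1-\<alpha>) *\<^sub>R (y + (s*t/(t-s)) *\<^sub>R (a - b)) \<in> Z"
    using convexD[OF assms(1) z p a0 _] a1 by simp
  moreover have "\<alpha> *\<^sub>R ((1/(1-t)) *\<^sub>R (y - t *\<^sub>R a)) + (1-\<alpha>) *\<^sub>R (y + (s*t/(t-s)) *\<^sub>R (a - b))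
     = (1/(1-s)) *\<^sub>R (y - s *\<^sub>R b)"
  proof -
    have e1: "\<alpha> * (1/(1-t)) = s/(t*(1-s))"
    proof -
      have "\<alpha> * (1/(1-t)) = (s/(t*(1-s))) * ((1-t)/(1-t))" unfolding \<alpha>_def by simp
      also have "(1-t)/(1-t) = 1" using t0 by simp
      finally show ?thesis by simp
    qed
    have e2: "\<alpha> * (1/(1-t)) * t = s/(1-s)" proof -
      have "\<alpha> * (1/(1-t)) * t = s/(t*(1-s)) * t" by (simp only: e1)
      also have "\<dots> = s/(1-s)" using t0 by simp
      finally show ?thesis .
    qed
    have e3: "(1-\<alpha>) * (s*t/(t-s)) = s/(1-s)"
    proof -
      have "(1-\<alpha>) * (s*t/(t-s)) = ((t-s)*(s*t))/((t*(1-s))*(t-s))" unfolding 1 by (rule times_divide_times_eq)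
      also have "\<dots> = (s*((t-s)*t))/((1-s)*((t-s)*t))" by (simp add: ac_simps)
      also have "\<dots> = s/(1-s)" using t0 by (intro mult_divide_mult_cancel_right) simp
      finally show ?thesis .
    qed
    have e4: "s/(t*(1-s)) + (t - s)/(t*(1-s)) = 1/(1-s)"
    proof -
      have "s/(t*(1-s)) + (t - s)/(t*(1-s)) = (t*1)/(t*(1-s))" by (simp add: add_divide_distrib[symmetric])
      also have "\<dots> = 1/(1-s)" using t0 by (intro nonzero_mult_divide_mult_cancel_left) simp
      finally show ?thesis .
    qed
    have "\<alpha> *\<^sub>R ((1/(1-t)) *\<^sub>R (y - t *\<^sub>R a)) + (1-\<alpha>) *\<^sub>R (y + (s*t/(t-s)) *\<^sub>R (a - b))
      = (\<alpha> * (1/(1-t))) *\<^sub>R y - (\<alpha> * (1/(1-t)) * t) *\<^sub>R a + (1-\<alpha>) *\<^sub>R y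
         + ((1-\<alpha>) * (s*t/(t-s))) *\<^sub>R a - ((1-\<alpha>) * (s*t/(t-s))) *\<^sub>R b"
      by (simp add: algebra_simps)
    also have "\<dots> = (s/(t*(1-s)) + (t - s)/(t*(1-s))) *\<^sub>R y - (s/(1-s)) *\<^sub>R b"
      unfolding e1 e2 e3 unfolding 1 using t0 by (simp add: scaleR_left_distrib)
    also have "\<dots> = (1/(1-s)) *\<^sub>R (y - s *\<^sub>R b)" unfolding e4 by (simp add: algebra_simps)
    finally show ?thesis .
  qed
  ultimately show ?thesis by simp
qed
lemma kbound:
  fixes s t e E n :: real
  assumes "0 \<le> s" "s < t" "t < 1" "e > 0" "t - s > e/4" "0 \<le> n" "n < e*E/4"
  shows "\<bar>s*t/(t-s)\<bar> * n < E"
proof -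
  have k0: "0 \<le> s*t/(t-s)" using assms by simp
  have "s*t \<le> 1" using assms by (intro mult_le_one) auto
  hence "s*t/(t-s) \<le> 1/(t-s)" using assms by (intro divide_right_mono) auto
  also have "1/(t-s) \<le> 4/e" using assms by (simp add: field_simps)
  finally have k: "s*t/(t-s) \<le> 4/e" .
  have "\<bar>s*t/(t-s)\<bar> * n \<le> 4/e * n" using k k0 assms by (intro mult_right_mono) auto
  also have "\<dots> < 4/e * (e*E/4)" using assms by (intro mult_strict_left_mono) auto
  also have "\<dots> = E" using assms by simp
  finally show ?thesis .
qed

theorem proposition9:
  fixes Z :: "'a::euclidean_space set" and y :: 'a
  assumes "convex Z" and "y \<in> Z"
  shows "continuous_on Z (weight Z y) \<longleftrightarrow> y \<in> Z - cboundary Z"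
proof -
  define S where "S x = {t::real. 0 \<le> t \<and> t < 1 \<and> (1 / (1 - t)) *\<^sub>R (y - t *\<^sub>R x) \<in> Z}" for x
  have w: "weight Z y x = Sup (S x)" for x by (simp add: weight_def S_def)
  have S0: "0 \<in> S x" for x using assms(2) by (simp add: S_def)
  have Sbdd: "bdd_above (S x)" for x by (rule bdd_aboveI[of _ 1]) (auto simp: S_def)
  have Sup_up: "t \<in> S x \<Longrightarrow> t \<le> weight Z y x" for t x
    unfolding w using Sbdd by (simp add: cSup_upper)
  have w0: "0 \<le> weight Z y x" for x using Sup_up[OF S0] .
  have w1: "weight Z y x \<le> 1" for x
    unfolding w proof (rule cSup_least)
      show "S x \<noteq> {}" using S0 by auto
    qed (auto simp: S_def)
  have approx: "\<exists>t'\<in>S x. c < t'" if "c < weight Z y x" for c x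
    using that unfolding w using S0 Sbdd by (subst (asm) less_cSup_iff) auto
  show ?thesis
  proof
    assume nb: "y \<in> Z - cboundary Z"
    hence all: "\<forall>x\<in>Z. leC Z x y" by (auto simp: cboundary_def)
    have "y \<in> rel_interior Z"
    proof (subst convex_rel_interior_iff[OF assms(1)])
      show "Z \<noteq> {}" using assms by auto
      show "\<forall>x\<in>Z. \<exists>e>1. (1 - e) *\<^sub>R x + e *\<^sub>R y \<in> Z"
      proof
        fix x assume "x \<in> Z"
        then obtain z t where z: "z \<in> Z" "0 < t" "t \<le> 1" "y = t *\<^sub>R x + (1 - t) *\<^sub>R z"
          using all unfolding leC_def by blast
        show "\<exists>e>1. (1 - e) *\<^sub>R x + e *\<^sub>R y \<in> Z"
        proof (cases "t = 1")
          case True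
          hence "y = x" using z by simp
          moreover have "(1 - 2) *\<^sub>R x + (2::real) *\<^sub>R x = x" by (simp add: algebra_simps scaleR_2)
          ultimately show ?thesis using assms(2) by (intro exI[of _ 2]) auto
        next
          case False
          hence t1: "t < 1" using z by simp
          define e where "e = 1/(1-t)"
          have e1: "e > 1" using t1 z unfolding e_def by (simp add: field_simps)
          have ee: "e * (1 - t) = 1" using t1 unfolding e_def by simp
          have "(1 - e) *\<^sub>R x + e *\<^sub>R y = (1 - e + e*t) *\<^sub>R x + (e*(1-t)) *\<^sub>R z"
            unfolding z(4) by (simp add: algebra_simps)
          also have "1 - e + e*t = 0" using ee by (simp add: algebra_simps)
          finally have "(1 - e) *\<^sub>R x + e *\<^sub>R y = z" using ee by simp
          thus ?thesis using e1 z by auto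
        qed
      qed
    qed
    then obtain E where E: "E > 0" "ball y E \<inter> affine hull Z \<subseteq> Z"
      by (auto simp: mem_rel_interior_ball)
    have P: "y + k *\<^sub>R (a - b) \<in> Z" if "a \<in> Z" "b \<in> Z" "\<bar>k\<bar> * norm (a - b) < E" for a b k
    proof -
      have "y + k *\<^sub>R (a - b) \<in> affine hull Z"
        using that assms(2) by (intro mem_affine_3_minus affine_affine_hull hull_inc)
      moreover have "y + k *\<^sub>R (a - b) \<in> ball y E" using that by (simp add: dist_norm)
      ultimately show ?thesis using E by auto
    qed
    show "continuous_on Z (weight Z y)"
    proof (unfold continuous_on_iff, intro ballI allI impI)
      fix x0 and e :: real assume x0: "x0 \<in> Z" and e: "e > 0"
      show "\<exists>d>0. \<forall>x'\<in>Z. dist x' x0 < d \<longrightarrow> dist (weight Z y x') (weight Z y x0) < e"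
      proof (intro exI[of _ "e*E/4"] conjI ballI impI)
        show "e*E/4 > 0" using e E by simp
        fix x' assume x': "x' \<in> Z" and dx: "dist x' x0 < e*E/4"
        have lower: "weight Z y x' > weight Z y x0 - e"
        proof (cases "weight Z y x0 < e/2")
          case True thus ?thesis using w0[of x'] e by linarith
        next
          case False
          define s where "s = weight Z y x0 - e/2"
          obtain t' where t': "t' \<in> S x0" "weight Z y x0 - e/4 < t'"
            using approx[of "weight Z y x0 - e/4" x0] e by auto
          have s0: "0 \<le> s" using False s_def by simp
          have st: "s < t'" "t' < 1" "t' - s > e/4" using t' s_def e by (auto simp: S_def)
          have "y + (s*t'/(t'-s)) *\<^sub>R (x0 - x') \<in> Z"
            using x0 x' kbound[OF s0 st(1,2) e st(3) _ , of "norm (x0 - x')" E] dx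
            by (intro P) (auto simp: dist_norm norm_minus_commute)
          hence "(1/(1-s)) *\<^sub>R (y - s *\<^sub>R x') \<in> Z"
            using key[OF assms(1) s0 st(1,2)] t' by (auto simp: S_def)
          hence "s \<in> S x'" using s0 st by (simp add: S_def)
          hence "s \<le> weight Z y x'" by (rule Sup_up)
          thus ?thesis using s_def e by simp
        qed
        have upper: "weight Z y x' < weight Z y x0 + e"
        proof (cases "weight Z y x0 + e/2 \<ge> 1")
          case True thus ?thesis using w1[of x'] e by linarith
        next
          case False
          show ?thesis
          proof (rule ccontr)
            assume "\<not> ?thesis"
            then obtain t' where t': "t' \<in> S x'" "weight Z y x0 + e/2 < t'"
              using approx[of "weight Z y x0 + e/2" x'] e by force
            define s where "s = weight Z y x0 + e/4"
            have s0: "0 \<le> s" using w0[of x0] e s_def by simp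
            have st: "s < t'" "t' < 1" "t' - s > e/4" using t' s_def e by (auto simp: S_def)
            have "y + (s*t'/(t'-s)) *\<^sub>R (x' - x0) \<in> Z"
              using x0 x' kbound[OF s0 st(1,2) e st(3) _ , of "norm (x' - x0)" E] dx
              by (intro P) (auto simp: dist_norm)
            hence "(1/(1-s)) *\<^sub>R (y - s *\<^sub>R x0) \<in> Z"
              using key[OF assms(1) s0 st(1,2)] t' by (auto simp: S_def)
            hence "s \<in> S x0" using s0 st by (simp add: S_def)
            hence "s \<le> weight Z y x0" by (rule Sup_up)
            thus False using s_def e by simp
          qed
        qed
        show "dist (weight Z y x') (weight Z y x0) < e"
          using lower upper by (simp add: dist_real_def abs_less_iff)
      qed
    qed
  next
    assume cont: "continuous_on Z (weight Z y)"
    show "y \<in> Z - cboundary Z"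
    proof (rule ccontr)
      assume "\<not> ?thesis"
      then obtain x where x: "x \<in> Z" "\<not> leC Z x y" using assms(2) by (auto simp: cboundary_def)
      have xy: "x \<noteq> y"
      proof
        assume "x = y" hence "leC Z x y" using assms(2) unfolding leC_def
          by (intro bexI[of _ y] exI[of _ 1]) auto
        thus False using x by simp
      qed
      have Sy: "S y = {0..<1}"
      proof -
        have "(1 / (1 - t)) *\<^sub>R (y - t *\<^sub>R y) = y" if "t < 1" for t :: real
        proof -
          have "y - t *\<^sub>R y = (1 - t) *\<^sub>R y" by (simp add: algebra_simps)
          thus ?thesis using that by simp
        qed
        thus ?thesis using assms(2) by (auto simp: S_def)
      qed
      have wy: "weight Z y y = 1" unfolding w Sy by simp
      have ws: "weight Z y (y + s *\<^sub>R (x - y)) = 0" if s: "0 < s" "s \<le> 1" for s :: real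
      proof -
        define xs where "xs = y + s *\<^sub>R (x - y)"
        have "S xs = {0}"
        proof (rule ccontr)
          assume "S xs \<noteq> {0}"
          then obtain t where t: "t \<in> S xs" "t \<noteq> 0" using S0 by blast
          hence t0: "0 < t" "t < 1" and zZ: "(1 / (1 - t)) *\<^sub>R (y - t *\<^sub>R xs) \<in> Z"
            by (auto simp: S_def)
          define z where "z = (1 / (1 - t)) *\<^sub>R (y - t *\<^sub>R xs)"
          define Dn where "Dn = 1 - t + t * s"
          have Dn0: "Dn > 0" using t0 s unfolding Dn_def by (smt (verit) mult_nonneg_nonneg)
          have "(1 - t) *\<^sub>R z = y - t *\<^sub>R xs" using t0 unfolding z_def by simp
          hence Dy: "Dn *\<^sub>R y = (t * s) *\<^sub>R x + (1-t) *\<^sub>R z"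
            unfolding Dn_def xs_def by (simp add: algebra_simps)
          define c where "c = t * s/Dn"
          have c: "0 < c" "c \<le> 1" using Dn0 t0 s unfolding c_def Dn_def by (auto simp: field_simps)
          have c1: "1 - c = (1-t)/Dn" using Dn0 unfolding c_def Dn_def by (simp add: field_simps)
          have "y = (1/Dn) *\<^sub>R (Dn *\<^sub>R y)" using Dn0 by simp
          also have "\<dots> = (1/Dn * (t * s)) *\<^sub>R x + (1/Dn * (1-t)) *\<^sub>R z" unfolding Dy by (simp only: scaleR_add_right scaleR_scaleR)
          also have "\<dots> = c *\<^sub>R x + (1 - c) *\<^sub>R z" by (simp only: c1) (simp add: c_def)
          finally have yc: "y = c *\<^sub>R x + (1 - c) *\<^sub>R z" .
          have zin: "z \<in> Z" using zZ unfolding z_def .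
          have "leC Z x y" unfolding leC_def using c zin yc by blast
          thus False using x by simp
        qed
        thus ?thesis unfolding w xs_def by simp
      qed
      obtain d where d: "d > 0" "\<forall>x'\<in>Z. dist x' y < d \<longrightarrow> dist (weight Z y x') (weight Z y y) < 1/2"
        using cont assms(2) unfolding continuous_on_iff by (metis half_gt_zero zero_less_one)
      define s where "s = min 1 (d / (2 * norm (x - y)))"
      have nxy: "norm (x - y) > 0" using xy by simp
      have s: "0 < s" "s \<le> 1" using d nxy unfolding s_def by auto
      have inZ: "y + s *\<^sub>R (x - y) \<in> Z"
      proof -
        have "y + s *\<^sub>R (x - y) = (1 - s) *\<^sub>R y + s *\<^sub>R x" by (simp add: algebra_simps)
        thus ?thesis using convexD[OF assms(1) assms(2) x(1), of "1-s" s] s by simp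
      qed
      have "dist (y + s *\<^sub>R (x - y)) y = s * norm (x - y)" using s by (simp add: dist_norm)
      also have "\<dots> \<le> d/(2*norm(x-y)) * norm (x - y)" using nxy unfolding s_def
        by (intro mult_right_mono) auto
      also have "\<dots> = d/2" using nxy by simp
      also have "\<dots> < d" using d by simp
      finally have "dist (weight Z y (y + s *\<^sub>R (x - y))) (weight Z y y) < 1/2" using d inZ by blast
      thus False unfolding ws[OF s] wy by simp
    qed
  qed
qed
end
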